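(* Let $q$ be a prime power and $n \ge 2$ an integer. For any $\epsilon_1, \epsilon_2 > 0$ there is a constant $C = C(\epsilon_1,\epsilon_2,n,q)$ such that, if an $n$-tuple $(T_1,\ldots,T_n)$ of positive integers satisfies $T_1\cdots T_n > C$, then choosing a periodic sequence $s:\mathbb{N}_0^n \to \mathbb{F}_q$ of period $(T_1,\ldots,T_n)$ with each such sequence having equal probability $1/q^{T_1\cdots T_n}$, we have $$\mathcal{P}\left( L(s) > \sqrt{(1-\epsilon_1) T_1\cdots T_n/(n-1)} \right) > 1 - \epsilon_2.$$
   Context: An $n$-dimensional sequence over $\mathbb{F}_q$ is a map $s:\mathbb{N}_0^n \to \mathbb{F}_q$. A polynomial $P(\mathbf{X}) = \sum_{\mathbf{j}} a_{\mathbf{j}} X_1^{j_1}\cdots X_n^{j_n} \in \mathbb{F}_q[X_1,\ldots,X_n]$ acts on $s$ by $(Ps)(\mathbf{m}) = \sum_{\mathbf{j}} a_{\mathbf{j}} s(\mathbf{m}+\mathbf{j})$. Let $I(s) = \{P : Ps = 0\}$, an ideal. The linear complexity $L(s)$ is the dimension of $\mathbb{F}_q[X_1,\ldots,X_n]/I(s)$ over $\mathbb{F}_q$. The sequence $s$ is periodic with period $(T_1,\ldots,T_n)$ if $X_i^{T_i}-1 \in I(s)$ for all $i$, i.e. $s(\mathbf{m}+T_i\mathbf{e}_i)=s(\mathbf{m})$ for all $\mathbf{m}$ and $i$; such a sequence is determined by its values on $\{(m_1,\ldots,m_n): 0 \le m_i \le T_i-1\}$, so there are $q^{T_1\cdots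 T_n}$ of them. *)

theory Defs
  imports Complex_Main "HOL-Library.Cardinality"
begin

text \<open>An n-dimensional sequence over a field: indices are exponent vectors
  'n \<Rightarrow> nat (the finite type 'n indexes the n coordinates).
  A polynomial in n variables is represented by its coefficient function on
  exponent vectors, required to have finite support.\<close>

definition is_poly :: "(('n \<Rightarrow> nat) \<Rightarrow> 'a::zero) \<Rightarrow> bool" where
  "is_poly P \<longleftrightarrow> finite {j. P j \<noteq> 0}"

definition poly_act :: "(('n \<Rightarrow> nat) \<Rightarrow> 'a::field) \<Rightarrow> (('n \<Rightarrow> nat) \<Rightarrow> 'a) \<Rightarrow> ('n \<Rightarrow> nat) \<Rightarrow> 'a" where
  "poly_act P s m = (\<Sum>j\<in>{j. P j \<noteq> 0}. P j * s (\<lambda>i. m i + j i))"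

definition ann_ideal :: "(('n \<Rightarrow> nat) \<Rightarrow> 'a::field) \<Rightarrow> (('n \<Rightarrow> nat) \<Rightarrow> 'a) set" where
  "ann_ideal s = {P. is_poly P \<and> poly_act P s = (\<lambda>_. 0)}"

definition lin_indep_mod ::
  "(('n \<Rightarrow> nat) \<Rightarrow> 'a::field) set \<Rightarrow> nat \<Rightarrow> (nat \<Rightarrow> ('n \<Rightarrow> nat) \<Rightarrow> 'a) \<Rightarrow> bool" where
  "lin_indep_mod I k b \<longleftrightarrow>
     (\<forall>c::nat \<Rightarrow> 'a. (\<lambda>j. \<Sum>i<k. c i * b i j) \<in> I \<longrightarrow> (\<forall>i<k. c i = 0))"

text \<open>Linear complexity L(s) = dim_F (F[X_1..X_n] / I(s)), i.e. the maximal number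
  of polynomials linearly independent modulo I(s).\<close>
definition lin_compl :: "(('n \<Rightarrow> nat) \<Rightarrow> 'a::field) \<Rightarrow> nat" where
  "lin_compl s = Sup {k. \<exists>b. (\<forall>i<k. is_poly (b i)) \<and> lin_indep_mod (ann_ideal s) k b}"

definition periodic_seqs :: "('n \<Rightarrow> nat) \<Rightarrow> (('n \<Rightarrow> nat) \<Rightarrow> 'a) set" where
  "periodic_seqs T = {s. \<forall>m i. s (m(i := m i + T i)) = s m}"

end

theory Submission
  imports Defs "HOL-Library.FuncSet"
begin

definition addv :: "('n \<Rightarrow> nat) \<Rightarrow> ('n \<Rightarrow> nat) \<Rightarrow> 'n \<Rightarrow> nat" where
  "addv x j = (\<lambda>i. x i + j i)"
definition sh :: "('n \<Rightarrow> nat) \<Rightarrow> (('n \<Rightarrow> nat) \<Rightarrow> 'a) \<Rightarrow> ('n \<Rightarrow> nat) \<Rightarrow> 'a" where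
  "sh j s = (\<lambda>x. s (addv x j))"
definition lc :: "(('n \<Rightarrow> nat) \<Rightarrow> 'a::field) \<Rightarrow> ('n \<Rightarrow> nat) set \<Rightarrow> (('n \<Rightarrow> nat) \<Rightarrow> 'a) \<Rightarrow> ('n \<Rightarrow> nat) \<Rightarrow> 'a" where
  "lc s S c = (\<lambda>x. \<Sum>j\<in>S. c j * s (addv x j))"
definition inspan :: "(('n \<Rightarrow> nat) \<Rightarrow> 'a::field) \<Rightarrow> ('n \<Rightarrow> nat) set \<Rightarrow> (('n \<Rightarrow> nat) \<Rightarrow> 'a) \<Rightarrow> bool" where
  "inspan s S f \<longleftrightarrow> (\<exists>c. f = lc s S c)"
definition succ :: "('n \<Rightarrow> nat) \<Rightarrow> 'n \<Rightarrow> 'n \<Rightarrow> nat" where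
  "succ j i = j(i := j i + 1)"

lemma sum_upd_UNIV:
  fixes m :: "'n::finite \<Rightarrow> nat"
  shows "sum (m(i := v)) UNIV = v + sum m (UNIV - {i})"
proof -
  have "sum (m(i := v)) UNIV = (m(i:=v)) i + sum (m(i := v)) (UNIV - {i})"
    by (rule sum.remove) auto
  also have "sum (m(i := v)) (UNIV - {i}) = sum m (UNIV - {i})"
    by (rule sum.cong) auto
  finally show ?thesis by simp
qed

lemma sh_zero: "sh (\<lambda>_. 0) D = D"
  by (simp add: sh_def addv_def)

lemma shift_inspan:
  fixes D :: "('n \<Rightarrow> nat) \<Rightarrow> 'a::field"
  assumes fin: "finite S" and step: "\<forall>j\<in>S. inspan D S (sh (succ j i) D)"
    and f: "f = lc D S c"
  shows "inspan D S (\<lambda>x. f (x(i := x i + 1)))"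
proof -
  from step obtain d where d: "\<And>j. j \<in> S \<Longrightarrow> sh (succ j i) D = lc D S (d j)"
    unfolding inspan_def by metis
  have "(\<lambda>x. f (x(i := x i + 1))) = lc D S (\<lambda>l. \<Sum>j\<in>S. c j * d j l)"
  proof
    fix x
    have "f (x(i := x i + 1)) = (\<Sum>j\<in>S. c j * sh (succ j i) D x)"
      unfolding f lc_def sh_def
      by (rule sum.cong) (auto simp: addv_def succ_def intro!: arg_cong[where f=D])
    also have "\<dots> = (\<Sum>j\<in>S. c j * (\<Sum>l\<in>S. d j l * D (addv x l)))"
      by (rule sum.cong) (auto simp: d lc_def)
    also have "\<dots> = (\<Sum>j\<in>S. \<Sum>l\<in>S. c j * d j l * D (addv x l))"
      by (simp add: sum_distrib_left mult.assoc)
    also have "\<dots> = (\<Sum>l\<in>S. \<Sum>j\<in>S. c j * d j l * D (addv x l))"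
      by (rule sum.swap)
    also have "\<dots> = lc D S (\<lambda>l. \<Sum>j\<in>S. c j * d j l) x"
      by (simp add: lc_def sum_distrib_right)
    finally show "f (x(i := x i + 1)) = lc D S (\<lambda>l. \<Sum>j\<in>S. c j * d j l) x" .
  qed
  then show ?thesis unfolding inspan_def by blast
qed

lemma span_all:
  fixes D :: "('n::finite \<Rightarrow> nat) \<Rightarrow> 'a::field"
  assumes fin: "finite S" and base: "inspan D S D"
    and step: "\<forall>j\<in>S. \<forall>i. inspan D S (sh (succ j i) D)"
  shows "inspan D S (sh m D)"
proof (induction "sum m UNIV" arbitrary: m)
  case 0
  then have "m = (\<lambda>_. 0)" by (simp add: fun_eq_iff)
  then show ?case using base by (simp add: sh_zero)
next
  case (Suc k)
  have "sum m UNIV \<noteq> 0" using Suc(2) by linarith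
  then have "\<exists>a. 0 < m a" by simp
  then obtain i where i: "m i > 0" by blast
  define m' where "m' = m(i := m i - 1)"
  have "sum m UNIV = m i + sum m (UNIV - {i})"
    by (rule sum.remove) auto
  moreover have "sum m' UNIV = (m i - 1) + sum m (UNIV - {i})"
    unfolding m'_def by (rule sum_upd_UNIV)
  ultimately have "k = sum m' UNIV" using Suc(2) i by linarith
  then have IH: "inspan D S (sh m' D)" by (rule Suc.hyps)
  then obtain c where c: "sh m' D = lc D S c" unfolding inspan_def by blast
  have "inspan D S (\<lambda>x. sh m' D (x(i := x i + 1)))"
    by (rule shift_inspan[OF fin _ c]) (use step in blast)
  moreover have "(\<lambda>x. sh m' D (x(i := x i + 1))) = sh m D"
    using i unfolding sh_def addv_def m'_def
    by (intro ext arg_cong[where f=D]) (auto simp: fun_eq_iff)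
  ultimately show ?case by simp
qed


definition border :: "('n \<Rightarrow> nat) set \<Rightarrow> (('n \<Rightarrow> nat) \<times> 'n) set" where
  "border S = {(j,i). j \<in> S \<and> succ j i \<notin> S}"
definition spans :: "(('n \<Rightarrow> nat) \<Rightarrow> 'a::field) \<Rightarrow> ('n \<Rightarrow> nat) set \<Rightarrow> bool" where
  "spans s S \<longleftrightarrow> inspan s S s \<and> (\<forall>j\<in>S. \<forall>i. inspan s S (sh (succ j i) s))"
definition coef :: "(('n \<Rightarrow> nat) \<Rightarrow> 'a::field) \<Rightarrow> ('n \<Rightarrow> nat) set \<Rightarrow> (('n \<Rightarrow> nat) \<Rightarrow> 'a) \<Rightarrow> ('n \<Rightarrow> nat) \<Rightarrow> 'a" where
  "coef s S f = (SOME c. c \<in> S \<rightarrow>\<^sub>E UNIV \<and> f = lc s S c)"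
definition enc where
  "enc S s = (\<lambda>p \<in> border S. coef s S (sh (succ (fst p) (snd p)) s), coef s S s, restrict s S)"

lemma lc_restrict: "lc s S (restrict c S) = lc s S c"
  unfolding lc_def by (intro ext sum.cong) auto

lemma coef:
  assumes "inspan s S f"
  shows "coef s S f \<in> S \<rightarrow>\<^sub>E UNIV \<and> f = lc s S (coef s S f)"
proof -
  from assms obtain c where "f = lc s S c" unfolding inspan_def by blast
  then have "restrict c S \<in> S \<rightarrow>\<^sub>E UNIV \<and> f = lc s S (restrict c S)"
    by (simp add: lc_restrict)
  then show ?thesis unfolding coef_def
    by (rule someI[where P="\<lambda>c. c \<in> S \<rightarrow>\<^sub>E UNIV \<and> f = lc s S c"])
qed

lemma addv_0: "addv (\<lambda>_. 0) m = m"
  by (simp add: addv_def)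

lemma vanish:
  fixes D :: "('n::finite \<Rightarrow> nat) \<Rightarrow> 'a::field"
  assumes fin: "finite S" and sp: "spans D S" and z: "\<forall>j\<in>S. D j = 0"
  shows "D = (\<lambda>_. 0)"
proof
  fix m
  have "inspan D S (sh m D)"
    using span_all[OF fin] sp unfolding spans_def by blast
  then obtain c where c: "sh m D = lc D S c" unfolding inspan_def by blast
  have "D m = sh m D (\<lambda>_. 0)" by (simp add: sh_def addv_0)
  also have "\<dots> = (\<Sum>j\<in>S. c j * D j)" by (simp add: c lc_def addv_0)
  also have "\<dots> = 0" using z by simp
  finally show "D m = 0" .
qed

lemma lc_diff: "lc (\<lambda>x. s x - s' x) S c = (\<lambda>x. lc s S c x - lc s' S c x)"
  unfolding lc_def by (simp add: sum_subtractf right_diff_distrib)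

lemma lc_delta:
  assumes "finite S" "w \<in> S"
  shows "lc D S (\<lambda>l. if l = w then 1 else 0) = sh w D"
proof
  fix x
  have "(\<Sum>j\<in>S. (if j = w then 1 else 0) * D (addv x j)) = (\<Sum>j\<in>S. (if j = w then D (addv x w) else 0))"
    by (rule sum.cong) auto
  then show "lc D S (\<lambda>l. if l = w then 1 else 0) x = sh w D x"
    using assms unfolding lc_def sh_def by simp
qed

lemma enc_inj:
  fixes s s' :: "('n::finite \<Rightarrow> nat) \<Rightarrow> 'a::field"
  assumes fin: "finite S" and sp: "spans s S" and sp': "spans s' S"
    and eq: "enc S s = enc S s'"
  shows "s = s'"
proof -
  define D where "D = (\<lambda>x. s x - s' x)"
  have c0: "coef s S s = coef s' S s'" and r: "restrict s S = restrict s' S"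
    using eq unfolding enc_def by auto
  have b: "coef s S (sh (succ j i) s) = coef s' S (sh (succ j i) s')" if "(j,i) \<in> border S" for j i
  proof -
    have "(\<lambda>p \<in> border S. coef s S (sh (succ (fst p) (snd p)) s)) (j,i)
        = (\<lambda>p \<in> border S. coef s' S (sh (succ (fst p) (snd p)) s')) (j,i)"
      using eq unfolding enc_def by simp
    then show ?thesis using that by simp
  qed
  have base: "inspan D S D"
  proof -
    have "s = lc s S (coef s S s)" "s' = lc s' S (coef s' S s')"
      using coef sp sp' unfolding spans_def by blast+
    then have "D = lc D S (coef s S s)" unfolding D_def lc_diff using c0 by metis
    then show ?thesis unfolding inspan_def by blast
  qed
  have step: "inspan D S (sh (succ j i) D)" if j: "j \<in> S" for j i
  proof (cases "succ j i \<in> S")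
    case True
    then show ?thesis unfolding inspan_def using lc_delta[OF fin True] by metis
  next
    case False
    then have jb: "(j,i) \<in> border S" using j unfolding border_def by simp
    define \<beta> where "\<beta> = coef s S (sh (succ j i) s)"
    have e1: "sh (succ j i) s = lc s S \<beta>" using coef sp j unfolding spans_def \<beta>_def by blast
    have e2: "sh (succ j i) s' = lc s' S \<beta>" using coef sp' j b[OF jb] unfolding spans_def \<beta>_def by metis
    have "sh (succ j i) D = (\<lambda>x. sh (succ j i) s x - sh (succ j i) s' x)" unfolding D_def sh_def by simp
    also have "\<dots> = lc D S \<beta>" unfolding D_def lc_diff e1 e2 ..
    finally have "sh (succ j i) D = lc D S \<beta>" .
    then show ?thesis unfolding inspan_def by blast
  qed
  have "D = (\<lambda>_. 0)"
  proof (rule vanish[OF fin])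
    show "spans D S" unfolding spans_def using base step by blast
    show "\<forall>j\<in>S. D j = 0" using r unfolding D_def by (metis restrict_apply' right_minus_eq)
  qed
  then show ?thesis unfolding D_def by (auto simp: fun_eq_iff)
qed

lemma finite_border: "finite S \<Longrightarrow> finite (border (S :: ('n::finite \<Rightarrow> nat) set))"
  by (rule finite_subset[of _ "S \<times> UNIV"]) (auto simp: border_def)

lemma card_class:
  fixes S :: "('n::finite \<Rightarrow> nat) set"
  assumes fin: "finite S"
  shows "finite {s :: ('n \<Rightarrow> nat) \<Rightarrow> 'a::{finite,field}. spans s S}
     \<and> card {s :: ('n \<Rightarrow> nat) \<Rightarrow> 'a. spans s S}
     \<le> CARD('a) ^ (card S * card (border S) + 2 * card S)"
proof -
  let ?A = "{s :: ('n \<Rightarrow> nat) \<Rightarrow> 'a. spans s S}"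
  let ?C = "S \<rightarrow>\<^sub>E (UNIV :: 'a set)"
  let ?B = "(border S \<rightarrow>\<^sub>E ?C) \<times> ?C \<times> ?C"
  have inj: "inj_on (enc S) ?A"
    by (rule inj_onI) (use enc_inj[OF fin] in blast)
  have sub: "enc S ` ?A \<subseteq> ?B"
  proof
    fix x assume "x \<in> enc S ` ?A"
    then obtain s where s: "spans s S" "x = enc S s" by blast
    have "coef s S s \<in> ?C" using coef s(1) unfolding spans_def by blast
    moreover have "coef s S (sh (succ (fst p) (snd p)) s) \<in> ?C" if "p \<in> border S" for p
    proof -
      have "inspan s S (sh (succ (fst p) (snd p)) s)" using s(1) that unfolding spans_def border_def by auto
      then show ?thesis using coef by blast
    qed
    then have "(\<lambda>p \<in> border S. coef s S (sh (succ (fst p) (snd p)) s)) \<in> border S \<rightarrow>\<^sub>E ?C"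
      unfolding restrict_PiE_iff by blast
    ultimately show "x \<in> ?B" using s unfolding enc_def by auto
  qed
  have finB: "finite ?B" using fin finite_border[OF fin]
    by (intro finite_cartesian_product finite_PiE) auto
  have cC: "card ?C = CARD('a) ^ card S" using fin by (simp add: card_PiE)
  have "card ?B = (CARD('a) ^ card S) ^ card (border S) * (CARD('a) ^ card S * CARD('a) ^ card S)"
    using fin finite_border[OF fin] by (simp add: card_cartesian_product card_PiE cC)
  also have "\<dots> = CARD('a) ^ (card S * card (border S) + 2 * card S)"
    by (simp add: power_mult power_add mult_2)
  finally have cB: "card ?B = \<dots>" .
  have "finite ?A" using inj_on_finite[OF inj sub finB] .
  moreover have "card ?A \<le> card ?B" using card_inj_on_le[OF inj sub finB] .
  ultimately show ?thesis using cB by simp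
qed


definition conn :: "('n \<Rightarrow> nat) set \<Rightarrow> bool" where
  "conn S \<longleftrightarrow> (\<forall>w\<in>S. w \<noteq> (\<lambda>_. 0) \<longrightarrow> (\<exists>i. w i > 0 \<and> w(i := w i - 1) \<in> S))"

lemma border_bound:
  fixes S :: "('n::finite \<Rightarrow> nat) set"
  assumes fin: "finite S" and cn: "conn S"
  shows "card (border S) + card S \<le> CARD('n) * card S + 1"
proof -
  define I where "I = {(j,i). j \<in> S \<and> succ j i \<in> S}"
  have un: "border S \<union> I = S \<times> UNIV" and dj: "border S \<inter> I = {}"
    unfolding I_def border_def by auto
  have finI: "finite I" by (rule finite_subset[of _ "S \<times> UNIV"]) (auto simp: I_def fin)
  have "card (border S) + card I = card (S \<times> (UNIV :: 'n set))"
    using card_Un_disjoint[OF finite_border[OF fin] finI dj] un by simp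
  also have "\<dots> = CARD('n) * card S" by (simp add: card_cartesian_product)
  finally have e: "card (border S) + card I = CARD('n) * card S" .
  define f where "f w = (let i = (SOME i. w i > 0 \<and> w(i := w i - 1) \<in> S) in (w(i := w i - 1), i))" for w
  have fw: "fst (f w) \<in> S \<and> succ (fst (f w)) (snd (f w)) = w" if "w \<in> S - {\<lambda>_. 0}" for w
  proof -
    have "\<exists>i. w i > 0 \<and> w(i := w i - 1) \<in> S" using cn that unfolding conn_def by blast
    then have "(\<lambda>i. w i > 0 \<and> w(i := w i - 1) \<in> S) (SOME i. w i > 0 \<and> w(i := w i - 1) \<in> S)"
      by (rule someI_ex)
    then show ?thesis unfolding f_def Let_def succ_def by (auto simp: fun_eq_iff)
  qed
  have inj: "inj_on f (S - {\<lambda>_. 0})"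
  proof (rule inj_onI)
    fix x y assume "x \<in> S - {\<lambda>_. 0}" "y \<in> S - {\<lambda>_. 0}" "f x = f y"
    then show "x = y" using fw by metis
  qed
  have "f ` (S - {\<lambda>_. 0}) \<subseteq> I"
  proof
    fix p assume "p \<in> f ` (S - {\<lambda>_. 0})"
    then obtain w where "w \<in> S - {\<lambda>_. 0}" "p = f w" by blast
    then show "p \<in> I" using fw[of w] unfolding I_def by (cases p) auto
  qed
  then have "card (S - {\<lambda>_. 0}) \<le> card I" using card_inj_on_le[OF inj _ finI] by blast
  moreover have "card S \<le> card (S - {\<lambda>_. 0}) + 1"
    by (simp add: card_Diff_singleton_if) linarith
  ultimately show ?thesis using e by linarith
qed


definition box :: "('n \<Rightarrow> nat) \<Rightarrow> ('n \<Rightarrow> nat) set" where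
  "box T = {m. \<forall>i. m i < T i}"
definition modv :: "('n \<Rightarrow> nat) \<Rightarrow> ('n \<Rightarrow> nat) \<Rightarrow> 'n \<Rightarrow> nat" where
  "modv T m = (\<lambda>i. m i mod T i)"

lemma box_PiE: "box T = PiE UNIV (\<lambda>i. {..<T i})"
  unfolding box_def PiE_UNIV_domain by auto

lemma finite_box: "finite (box (T :: 'n::finite \<Rightarrow> nat))"
  unfolding box_PiE by (rule finite_PiE) auto

lemma card_box: "card (box (T :: 'n::finite \<Rightarrow> nat)) = (\<Prod>i\<in>UNIV. T i)"
  unfolding box_PiE by (simp add: card_PiE)

lemma modv_box: "(\<forall>i. T i > 0) \<Longrightarrow> modv T m \<in> box T"
  unfolding modv_def box_def by auto

lemma modv_id: "m \<in> box T \<Longrightarrow> modv T m = m"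
  unfolding modv_def box_def by auto

lemma modv_upd: "modv T (m(i := m i + T i)) = modv T m"
  unfolding modv_def by auto

lemma per_mod:
  fixes s :: "('n::finite \<Rightarrow> nat) \<Rightarrow> 'a"
  assumes sp: "s \<in> periodic_seqs T" and T: "\<forall>i. T i > 0"
  shows "s m = s (modv T m)"
proof (induction "sum m UNIV" arbitrary: m rule: less_induct)
  case less
  show ?case
  proof (cases "m \<in> box T")
    case True
    then show ?thesis by (simp add: modv_id)
  next
    case False
    then have "\<exists>i. \<not> m i < T i" unfolding box_def by simp
    then obtain i where i: "T i \<le> m i" by (auto simp: not_less)
    define m' where "m' = m(i := m i - T i)"
    have mm: "m = m'(i := m' i + T i)" using i unfolding m'_def by (auto simp: fun_eq_iff)
    have "sum m UNIV = m i + sum m (UNIV - {i})"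
      by (rule sum.remove) auto
    moreover have "sum m' UNIV = (m i - T i) + sum m (UNIV - {i})"
      unfolding m'_def by (rule sum_upd_UNIV)
    ultimately have lt: "sum m' UNIV < sum m UNIV" using i T[rule_format, of i] by linarith
    have per: "\<And>m i. s (m(i := m i + T i)) = s m" using sp unfolding periodic_seqs_def by blast
    have "s m = s m'" by (subst mm) (rule per)
    also have "\<dots> = s (modv T m')" by (rule less[OF lt])
    also have "modv T m' = modv T m" using modv_upd[of T m' i] mm by simp
    finally show ?thesis .
  qed
qed

lemma card_periodic:
  assumes T: "\<forall>i. T i > 0"
  shows "finite (periodic_seqs T :: (('n::finite \<Rightarrow> nat) \<Rightarrow> 'a::finite) set)
    \<and> card (periodic_seqs T :: (('n \<Rightarrow> nat) \<Rightarrow> 'a) set) = CARD('a) ^ (\<Prod>i\<in>UNIV. T i)"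
proof -
  let ?P = "periodic_seqs T :: (('n \<Rightarrow> nat) \<Rightarrow> 'a) set"
  let ?B = "box T \<rightarrow>\<^sub>E (UNIV :: 'a set)"
  have bij: "bij_betw (\<lambda>s. restrict s (box T)) ?P ?B"
  proof (rule bij_betw_byWitness[where f'="\<lambda>f m. f (modv T m)"])
    show "\<forall>a\<in>?P. (\<lambda>m. restrict a (box T) (modv T m)) = a"
    proof
      fix a assume a: "a \<in> ?P"
      show "(\<lambda>m. restrict a (box T) (modv T m)) = a"
      proof
        fix m
        have "restrict a (box T) (modv T m) = a (modv T m)" using modv_box[OF T] by simp
        also have "\<dots> = a m" using per_mod[OF a T] by metis
        finally show "restrict a (box T) (modv T m) = a m" .
      qed
    qed
    show "\<forall>a'\<in>?B. restrict (\<lambda>m. a' (modv T m)) (box T) = a'"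
      by (auto simp: fun_eq_iff modv_id PiE_def extensional_def)
    show "(\<lambda>s. restrict s (box T)) ` ?P \<subseteq> ?B" by auto
    show "(\<lambda>f m. f (modv T m)) ` ?B \<subseteq> ?P"
      unfolding periodic_seqs_def by (auto simp only: modv_upd)
  qed
  have "finite ?B" using finite_box by (intro finite_PiE) auto
  moreover have "card ?B = CARD('a) ^ (\<Prod>i\<in>UNIV. T i)"
    using card_PiE[OF finite_box, of T "\<lambda>_. UNIV :: 'a set"] by (simp add: card_box)
  ultimately show ?thesis using bij_betw_finite[OF bij] bij_betw_same_card[OF bij] by simp
qed

lemma poly_act_eq:
  assumes "finite A" "{j. P j \<noteq> 0} \<subseteq> A"
  shows "poly_act P s m = (\<Sum>j\<in>A. P j * s (addv m j))"
  unfolding poly_act_def addv_def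
  by (rule sum.mono_neutral_left) (use assms in auto)

lemma poly_act_periodic:
  assumes "s \<in> periodic_seqs T"
  shows "poly_act P s \<in> periodic_seqs T"
  unfolding periodic_seqs_def poly_act_def mem_Collect_eq
proof (intro allI)
  fix m i
  have per: "\<And>m i. s (m(i := m i + T i)) = s m" using assms unfolding periodic_seqs_def by blast
  have "\<And>j. s (\<lambda>l. (m(i := m i + T i)) l + j l) = s (\<lambda>l. m l + j l)"
  proof -
    fix j
    have "(\<lambda>l. (m(i := m i + T i)) l + j l) = (\<lambda>l. m l + j l)(i := (\<lambda>l. m l + j l) i + T i)"
      by (auto simp: fun_eq_iff)
    then show "s (\<lambda>l. (m(i := m i + T i)) l + j l) = s (\<lambda>l. m l + j l)"
      using per[of "\<lambda>l. m l + j l" i] by simp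
  qed
  then show "(\<Sum>j\<in>{j. P j \<noteq> 0}. P j * s (\<lambda>l. (m(i := m i + T i)) l + j l)) =
         (\<Sum>j\<in>{j. P j \<noteq> 0}. P j * s (\<lambda>ia. m ia + j ia))" by simp
qed


lemma periodic_zero:
  fixes s :: "('n::finite \<Rightarrow> nat) \<Rightarrow> 'a::zero"
  assumes sp: "s \<in> periodic_seqs T" and T: "\<forall>i. T i > 0" and z: "\<forall>m\<in>box T. s m = 0"
  shows "s = (\<lambda>_. 0)"
proof
  fix m
  have "s m = s (modv T m)" by (rule per_mod[OF sp T])
  also have "\<dots> = 0" using z modv_box[OF T] by blast
  finally show "s m = 0" .
qed

lemma K_bound:
  fixes s :: "('n::finite \<Rightarrow> nat) \<Rightarrow> 'a::{finite,field}"
  assumes sp: "s \<in> periodic_seqs T" and T: "\<forall>i. T i > 0"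
    and bp: "\<forall>i<k. is_poly (b i)" and li: "lin_indep_mod (ann_ideal s) k b"
  shows "k \<le> (\<Prod>i\<in>UNIV. T i)"
proof -
  define A where "A = (\<Union>i<k. {j. b i j \<noteq> 0})"
  have finA: "finite A" using bp unfolding A_def is_poly_def by auto
  define P where "P c = (\<lambda>j. \<Sum>i<k. c i * b i j)" for c :: "nat \<Rightarrow> 'a"
  have suppP: "{j. P c j \<noteq> 0} \<subseteq> A" for c
  proof
    fix j assume "j \<in> {j. P c j \<noteq> 0}"
    then have "(\<Sum>i<k. c i * b i j) \<noteq> 0" unfolding P_def by simp
    then obtain i where "i \<in> {..<k}" "c i * b i j \<noteq> 0" by (rule sum.not_neutral_contains_not_neutral)
    then show "j \<in> A" unfolding A_def by auto
  qed
  define F where "F c = restrict (poly_act (P c) s) (box T)" for c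
  let ?D = "{..<k} \<rightarrow>\<^sub>E (UNIV :: 'a set)"
  let ?B = "box T \<rightarrow>\<^sub>E (UNIV :: 'a set)"
  have inj: "inj_on F ?D"
  proof (rule inj_onI)
    fix c c' assume c: "c \<in> ?D" and c': "c' \<in> ?D" and eq: "F c = F c'"
    define d where "d i = c i - c' i" for i
    define Q where "Q = (\<lambda>j. \<Sum>i<k. d i * b i j)"
    have Qeq: "Q j = P c j - P c' j" for j
      unfolding Q_def P_def d_def by (simp add: sum_subtractf left_diff_distrib)
    have suppQ: "{j. Q j \<noteq> 0} \<subseteq> A" 
    proof
      fix x assume "x \<in> {j. Q j \<noteq> 0}"
      then have "P c x \<noteq> 0 \<or> P c' x \<noteq> 0" by (auto simp: Qeq)
      then show "x \<in> A" using suppP[of c] suppP[of c'] by blast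
    qed
    have actQ: "poly_act Q s m = poly_act (P c) s m - poly_act (P c') s m" for m
      using poly_act_eq[OF finA suppQ] poly_act_eq[OF finA suppP[of c]] poly_act_eq[OF finA suppP[of c']]
    proof -
      have "poly_act Q s m = (\<Sum>j\<in>A. Q j * s (addv m j))" by (rule poly_act_eq[OF finA suppQ])
      also have "\<dots> = (\<Sum>j\<in>A. P c j * s (addv m j)) - (\<Sum>j\<in>A. P c' j * s (addv m j))"
        by (simp add: Qeq sum_subtractf left_diff_distrib)
      also have "\<dots> = poly_act (P c) s m - poly_act (P c') s m"
        by (simp add: poly_act_eq[OF finA suppP])
      finally show ?thesis .
    qed
    have "\<forall>m\<in>box T. poly_act Q s m = 0"
    proof
      fix m assume m: "m \<in> box T"
      have "F c m = F c' m" using eq by simp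
      then show "poly_act Q s m = 0" using m unfolding F_def actQ by simp
    qed
    then have "poly_act Q s = (\<lambda>_. 0)"
      by (rule periodic_zero[OF poly_act_periodic[OF sp] T])
    moreover have "is_poly Q" unfolding is_poly_def using suppQ finA by (rule finite_subset)
    ultimately have "Q \<in> ann_ideal s" unfolding ann_ideal_def by simp
    then have "\<forall>i<k. d i = 0" using li unfolding lin_indep_mod_def Q_def by blast
    then show "c = c'" using c c' by (intro PiE_ext[OF c c']) (auto simp: d_def)
  qed
  have sub: "F ` ?D \<subseteq> ?B"
  proof
    fix x assume "x \<in> F ` ?D"
    then obtain c where "x = F c" by blast
    then show "x \<in> ?B" unfolding F_def by simp
  qed
  have finB: "finite ?B" using finite_box by (intro finite_PiE) auto
  have "card ?D \<le> card ?B" by (rule card_inj_on_le[OF inj sub finB])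
  moreover have "card ?D = CARD('a) ^ k"
    using card_PiE[of "{..<k}" "\<lambda>_. UNIV :: 'a set"] by simp
  moreover have "card ?B = CARD('a) ^ (\<Prod>i\<in>UNIV. T i)"
    using card_PiE[OF finite_box, of T "\<lambda>_. UNIV :: 'a set"] by (simp add: card_box)
  moreover have q1: "1 < CARD('a)"
    using card_mono[OF finite_class.finite_UNIV, of "{0::'a, 1}"] by simp
  ultimately have "CARD('a) ^ k \<le> CARD('a) ^ (\<Prod>i\<in>UNIV. T i)" by simp
  then show ?thesis by (rule power_le_imp_le_exp[OF q1])
qed

definition indep :: "(('n \<Rightarrow> nat) \<Rightarrow> 'a::field) \<Rightarrow> ('n \<Rightarrow> nat) set \<Rightarrow> bool" where
  "indep s S \<longleftrightarrow> (\<forall>c. lc s S c = (\<lambda>_. 0) \<longrightarrow> (\<forall>j\<in>S. c j = 0))"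

lemma lin_compl_ge:
  fixes s :: "('n::finite \<Rightarrow> nat) \<Rightarrow> 'a::{finite,field}"
  assumes sp: "s \<in> periodic_seqs T" and T: "\<forall>i. T i > 0"
    and fin: "finite S" and ind: "indep s S"
  shows "card S \<le> lin_compl s"
proof -
  let ?K = "{k. \<exists>b. (\<forall>i<k. is_poly (b i)) \<and> lin_indep_mod (ann_ideal s) k b}"
  have bdd: "bdd_above ?K"
    using K_bound[OF sp T] by (intro bdd_aboveI[of _ "\<Prod>i\<in>UNIV. T i"]) blast
  obtain g where g: "bij_betw g {0..<card S} S" using ex_bij_betw_nat_finite[OF fin] by blast
  define b where "b i = (\<lambda>j. if j = g i then 1 else (0::'a))" for i
  have "card S \<in> ?K"
  proof (intro CollectI exI conjI allI impI)
    fix i assume "i < card S"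
    have "{j. b i j \<noteq> 0} = {g i}" unfolding b_def by auto
    then show "is_poly (b i)" unfolding is_poly_def by simp
  next
    show "lin_indep_mod (ann_ideal s) (card S) b"
      unfolding lin_indep_mod_def
    proof (rule allI, rule impI)
      fix c :: "nat \<Rightarrow> 'a"
      assume Q: "(\<lambda>j. \<Sum>i<card S. c i * b i j) \<in> ann_ideal s"
      define c' where "c' l = c (the_inv_into {0..<card S} g l)" for l
      have c'g: "c' (g i) = c i" if "i < card S" for i
        unfolding c'_def using g that by (simp add: bij_betw_def the_inv_into_f_f)
      have Qj: "(\<Sum>i<card S. c i * b i j) = (if j \<in> S then c' j else 0)" for j
      proof -
        have "(\<Sum>i<card S. c i * b i j) = (\<Sum>i\<in>{0..<card S}. (\<lambda>l. c' l * (if j = l then 1 else 0)) (g i))"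
          unfolding b_def by (rule sum.cong) (auto simp: c'g)
        also have "\<dots> = (\<Sum>l\<in>S. c' l * (if j = l then 1 else 0))"
          by (rule sum.reindex_bij_betw[OF g])
        also have "\<dots> = (\<Sum>l\<in>S. if j = l then c' j else 0)"
          by (rule sum.cong) auto
        also have "\<dots> = (if j \<in> S then c' j else 0)" using fin by simp
        finally show ?thesis .
      qed
      define Qf where "Qf = (\<lambda>j. \<Sum>i<card S. c i * b i j)"
      have sQ: "{j. Qf j \<noteq> 0} \<subseteq> S" using Qj unfolding Qf_def by (auto split: if_splits)
      have "poly_act Qf s x = lc s S c' x" for x
      proof -
        have "poly_act Qf s x = (\<Sum>j\<in>S. Qf j * s (addv x j))" by (rule poly_act_eq[OF fin sQ])
        also have "\<dots> = lc s S c' x" unfolding lc_def by (rule sum.cong) (auto simp: Qj Qf_def)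
        finally show ?thesis .
      qed
      then have "poly_act Qf s = lc s S c'" by (rule ext)
      moreover have "poly_act Qf s = (\<lambda>_. 0)" unfolding Qf_def
        using Q unfolding ann_ideal_def by simp
      ultimately have "\<forall>j\<in>S. c' j = 0" using ind unfolding indep_def by metis
      then show "\<forall>i<card S. c i = 0"
        using c'g g by (metis atLeastLessThan_iff bij_betwE zero_le)
    qed
  qed
  then show ?thesis unfolding lin_compl_def using bdd by (rule cSup_upper)
qed


definition good :: "(('n \<Rightarrow> nat) \<Rightarrow> 'a::field) \<Rightarrow> ('n \<Rightarrow> nat) set \<Rightarrow> bool" where
  "good s S \<longleftrightarrow> finite S \<and> (\<forall>m\<in>S. \<forall>i. m i < card S) \<and> conn S \<and> indep s S"

lemma lc_insert:
  assumes "finite S" "w \<notin> S"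
  shows "lc s (insert w S) c = (\<lambda>x. c w * sh w s x + lc s S c x)"
  using assms unfolding lc_def sh_def by (simp add: sum.insert)

lemma insert_good:
  fixes s :: "('n \<Rightarrow> nat) \<Rightarrow> 'a::field"
  assumes g: "good s S" and w: "w \<notin> S" and ns: "\<not> inspan s S (sh w s)"
    and wb: "\<forall>l. w l \<le> card S"
    and wc: "w \<noteq> (\<lambda>_. 0) \<longrightarrow> (\<exists>i. w i > 0 \<and> w(i := w i - 1) \<in> S)"
  shows "good s (insert w S)"
proof -
  have fin: "finite S" using g unfolding good_def by blast
  have cS: "card (insert w S) = Suc (card S)" using fin w by simp
  have box: "\<forall>m\<in>insert w S. \<forall>i. m i < card (insert w S)"
    using g wb unfolding good_def cS by (auto simp: less_Suc_eq_le less_imp_le)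
  have cn: "conn (insert w S)"
    using g wc unfolding good_def conn_def by blast
  have ind: "indep s (insert w S)"
    unfolding indep_def
  proof (rule allI, rule impI)
    fix c assume z: "lc s (insert w S) c = (\<lambda>_. 0)"
    then have z': "c w * sh w s x + lc s S c x = 0" for x
      unfolding lc_insert[OF fin w] by meson
    have cw: "c w = 0"
    proof (rule ccontr)
      assume cw: "c w \<noteq> 0"
      have "sh w s = lc s S (\<lambda>j. - c j / c w)"
      proof
        fix x
        have "lc s S (\<lambda>j. - c j / c w) x = - lc s S c x / c w"
          unfolding lc_def by (simp add: sum_divide_distrib sum_negf)
        also have "\<dots> = sh w s x" using z'[of x] cw by (simp add: field_simps) (metis add.commute add_eq_0_iff2)
        finally show "sh w s x = lc s S (\<lambda>j. - c j / c w) x" by simp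
      qed
      then show False using ns unfolding inspan_def by blast
    qed
    then have "lc s S c = (\<lambda>_. 0)" using z' by auto
    then have "\<forall>j\<in>S. c j = 0" using g unfolding good_def indep_def by blast
    then show "\<forall>j\<in>insert w S. c j = 0" using cw by simp
  qed
  show ?thesis unfolding good_def using fin box cn ind by simp
qed

lemma exists_S:
  fixes s :: "('n::finite \<Rightarrow> nat) \<Rightarrow> 'a::{finite,field}"
  assumes sp: "s \<in> periodic_seqs T" and T: "\<forall>i. T i > 0"
  shows "\<exists>S. finite S \<and> card S \<le> lin_compl s \<and> (\<forall>m\<in>S. \<forall>i. m i < card S) \<and> conn S \<and> spans s S"
proof -
  have g0: "good s {}" unfolding good_def conn_def indep_def by simp
  have bnd: "\<forall>S. good s S \<longrightarrow> card S < lin_compl s + 1"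
    using lin_compl_ge[OF sp T] unfolding good_def by (simp add: less_Suc_eq_le)
  obtain S where gS: "good s S" and mx: "\<forall>S'. good s S' \<longrightarrow> card S' \<le> card S"
    using ex_has_greatest_nat[of "good s" "{}" card, OF g0 bnd] by blast
  have fin: "finite S" using gS unfolding good_def by blast
  have notin: "inspan s S (sh w s)"
    if wb: "\<forall>l. w l \<le> card S" and wc: "w \<noteq> (\<lambda>_. 0) \<longrightarrow> (\<exists>i. w i > 0 \<and> w(i := w i - 1) \<in> S)" for w
  proof (rule ccontr)
    assume ns: "\<not> inspan s S (sh w s)"
    have w: "w \<notin> S"
    proof
      assume "w \<in> S"
      then have "inspan s S (sh w s)" unfolding inspan_def using lc_delta[OF fin] by metis
      then show False using ns by blast
    qed
    have "good s (insert w S)" by (rule insert_good[OF gS w ns wb wc])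
    then have "card (insert w S) \<le> card S" using mx by blast
    then show False using fin w by simp
  qed
  have "inspan s S (sh (\<lambda>_. 0) s)" by (rule notin) auto
  then have base: "inspan s S s" by (simp add: sh_zero)
  have step: "inspan s S (sh (succ j i) s)" if j: "j \<in> S" for j i
  proof (rule notin)
    show "\<forall>l. succ j i l \<le> card S"
      using gS j unfolding good_def succ_def by (auto simp: Suc_leI less_imp_le)
    have "(succ j i)(i := succ j i i - 1) = j" unfolding succ_def by (auto simp: fun_eq_iff)
    then show "succ j i \<noteq> (\<lambda>_. 0) \<longrightarrow> (\<exists>i'. succ j i i' > 0 \<and> (succ j i)(i' := succ j i i' - 1) \<in> S)"
      using j by (intro impI exI[of _ i]) (auto simp: succ_def)
  qed
  have "card S \<le> lin_compl s" using lin_compl_ge[OF sp T fin] gS unfolding good_def by blast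
  then show ?thesis using fin gS base step unfolding good_def spans_def by blast
qed


lemma card_small_subsets:
  assumes fin: "finite A"
  shows "card {S. S \<subseteq> A \<and> card S \<le> k} \<le> (k + 1) * (card A + 1) ^ k"
proof -
  have eq: "{S. S \<subseteq> A \<and> card S \<le> k} = (\<Union>j\<in>{..k}. {S. S \<subseteq> A \<and> card S = j})" by auto
  have "card {S. S \<subseteq> A \<and> card S \<le> k} \<le> (\<Sum>j\<in>{..k}. card {S. S \<subseteq> A \<and> card S = j})"
    unfolding eq by (rule card_UN_le) simp
  also have "\<dots> = (\<Sum>j\<in>{..k}. card A choose j)" using n_subsets[OF fin] by simp
  also have "\<dots> \<le> (\<Sum>j\<in>{..k}. (card A + 1) ^ k)"
  proof (rule sum_mono)
    fix j assume j: "j \<in> {..k}"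
    show "card A choose j \<le> (card A + 1) ^ k"
    proof (cases "j \<le> card A")
      case True
      have "card A choose j \<le> card A ^ j" by (rule binomial_le_pow[OF True])
      also have "\<dots> \<le> (card A + 1) ^ j" by (rule power_mono) auto
      also have "\<dots> \<le> (card A + 1) ^ k" using j by (intro power_increasing) auto
      finally show ?thesis .
    next
      case False
      then have "card A choose j = 0" by (intro binomial_eq_0) simp
      then show ?thesis by (simp del: binomial_eq_0_iff)
    qed
  qed
  also have "\<dots> = (k + 1) * (card A + 1) ^ k" by simp
  finally show ?thesis .
qed

lemma bad_count:
  assumes T: "\<forall>i. T i > 0"
  shows "card {s \<in> (periodic_seqs T :: (('n::finite \<Rightarrow> nat) \<Rightarrow> 'a::{finite,field}) set). lin_compl s \<le> k}
    \<le> (k + 1) * (k ^ CARD('n) + 1) ^ k * CARD('a) ^ (k * ((CARD('n) - 1) * k + 1) + 2 * k)"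
proof -
  let ?Bad = "{s \<in> (periodic_seqs T :: (('n \<Rightarrow> nat) \<Rightarrow> 'a) set). lin_compl s \<le> k}"
  define Bk where "Bk = box (\<lambda>_::'n. k)"
  define SS where "SS = {S. S \<subseteq> Bk \<and> card S \<le> k \<and> conn S}"
  define E where "E = CARD('a) ^ (k * ((CARD('n) - 1) * k + 1) + 2 * k)"
  have finBk: "finite Bk" unfolding Bk_def by (rule finite_box)
  have cBk: "card Bk = k ^ CARD('n)" unfolding Bk_def card_box by simp
  have SSsub: "SS \<subseteq> {S. S \<subseteq> Bk \<and> card S \<le> k}" unfolding SS_def by auto
  have finSS: "finite SS" by (rule finite_subset[OF SSsub]) (use finBk in auto)
  have cSS: "card SS \<le> (k + 1) * (k ^ CARD('n) + 1) ^ k"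
    using card_mono[OF _ SSsub] card_small_subsets[OF finBk, of k] finBk cBk by simp
  have sub: "?Bad \<subseteq> (\<Union>S\<in>SS. {s. spans s S})"
  proof
    fix s assume s: "s \<in> ?Bad"
    then obtain S where S: "finite S" "card S \<le> lin_compl s" "\<forall>m\<in>S. \<forall>i. m i < card S" "conn S" "spans s S"
      using exists_S[OF _ T, of s] by blast
    have "card S \<le> k" using S(2) s by simp
    moreover have "S \<subseteq> Bk" unfolding Bk_def box_def using S(3) \<open>card S \<le> k\<close>
      by (auto intro: less_le_trans)
    ultimately have "S \<in> SS" unfolding SS_def using S(4) by blast
    then show "s \<in> (\<Union>S\<in>SS. {s. spans s S})" using S(5) by blast
  qed
  have each: "card {s :: ('n \<Rightarrow> nat) \<Rightarrow> 'a. spans s S} \<le> E" and finE: "finite {s :: ('n \<Rightarrow> nat) \<Rightarrow> 'a. spans s S}"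
    if S: "S \<in> SS" for S
  proof -
    have fS: "finite S" using S finBk unfolding SS_def by (auto intro: finite_subset)
    have ck: "card S \<le> k" and cn: "conn S" using S unfolding SS_def by auto
    have n1: "CARD('n) = Suc (CARD('n) - 1)" by (simp add: Suc_pred)
    have bb: "card (border S) + card S \<le> CARD('n) * card S + 1" by (rule border_bound[OF fS cn])
    moreover have "(CARD('n) - 1) * card S = CARD('n) * card S - card S"
      by (simp add: diff_mult_distrib)
    moreover have "card S \<le> CARD('n) * card S" by simp
    ultimately have "card (border S) \<le> (CARD('n) - 1) * card S + 1" by linarith
    also have "\<dots> \<le> (CARD('n) - 1) * k + 1" using ck by simp
    finally have cb: "card (border S) \<le> (CARD('n) - 1) * k + 1" .
    have ex: "card S * card (border S) + 2 * card S \<le> k * ((CARD('n) - 1) * k + 1) + 2 * k"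
      using mult_le_mono[OF ck cb] ck by linarith
    have q1: "1 \<le> CARD('a)" by (simp add: Suc_leI)
    show "card {s :: ('n \<Rightarrow> nat) \<Rightarrow> 'a. spans s S} \<le> E"
      using card_class[where 'a='a, OF fS] power_increasing[OF ex q1] unfolding E_def by (meson le_trans)
    show "finite {s :: ('n \<Rightarrow> nat) \<Rightarrow> 'a. spans s S}" using card_class[where 'a='a, OF fS] by blast
  qed
  have "card ?Bad \<le> card (\<Union>S\<in>SS. {s :: ('n \<Rightarrow> nat) \<Rightarrow> 'a. spans s S})"
    by (rule card_mono[OF _ sub]) (use finSS finE in blast)
  also have "\<dots> \<le> (\<Sum>S\<in>SS. card {s :: ('n \<Rightarrow> nat) \<Rightarrow> 'a. spans s S})" by (rule card_UN_le[OF finSS])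
  also have "\<dots> \<le> (\<Sum>S\<in>SS. E)" by (rule sum_mono) (rule each)
  also have "\<dots> = card SS * E" by simp
  also have "\<dots> \<le> (k + 1) * (k ^ CARD('n) + 1) ^ k * E" using cSS by simp
  finally show ?thesis unfolding E_def .
qed



lemma ln_le_3sqrt:
  fixes a :: real assumes a: "a \<ge> 1"
  shows "ln (a + 1) \<le> 3 * sqrt a"
proof -
  have p: "0 < sqrt (a + 1)" using a by simp
  have s4: "sqrt 4 = (2::real)" using real_sqrt_abs[of 2] by simp
  have s9: "sqrt 9 = (3::real)" using real_sqrt_abs[of 3] by simp
  have "ln (a + 1) = 2 * ln (sqrt (a + 1))" using a by (simp add: ln_sqrt)
  also have "\<dots> \<le> 2 * (sqrt (a + 1) - 1)" using ln_le_minus_one[OF p] by simp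
  also have "\<dots> \<le> 2 * sqrt (a + 1)" by simp
  also have "\<dots> = sqrt (4 * (a + 1))" using s4 by (simp only: real_sqrt_mult)
  also have "\<dots> \<le> sqrt (9 * a)" using a by simp
  also have "\<dots> = 3 * sqrt a" using s9 by (simp only: real_sqrt_mult)
  finally show ?thesis .
qed

lemma asym_core:
  fixes n :: nat and L e \<epsilon> u :: real
  assumes L: "L > 0" and e: "e > 0" and u1: "u \<ge> 1"
    and uU: "u \<ge> (3 * (real n + 1) + 3 * L + \<bar>ln \<epsilon>\<bar> + 1) / (e * L)"
  shows "(1 + u^2 * real n) * (3 * u) + 3 * L * u^2 - e * L * u^4 < ln \<epsilon>"
proof -
  let ?K = "3 * (real n + 1) + 3 * L + \<bar>ln \<epsilon>\<bar> + 1"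
  have eL: "e * L > 0" using L e by simp
  have u2: "1 \<le> u^2" using u1 by (simp add: one_le_power)
  have u3: "1 \<le> u^3" using u1 by (simp add: one_le_power)
  have "1 + u^2 * real n \<le> u^2 + u^2 * real n" using u2 by simp
  then have t1: "(1 + u^2 * real n) * (3 * u) \<le> (u^2 + u^2 * real n) * (3 * u)"
    using u1 by (intro mult_right_mono) auto
  have t1': "(u^2 + u^2 * real n) * (3 * u) = 3 * (real n + 1) * u^3"
    by (simp add: algebra_simps power2_eq_square power3_eq_cube)
  have t2: "3 * L * u^2 \<le> 3 * L * u^3"
    using L u1 by (intro mult_left_mono power_increasing) auto
  have "?K \<le> e * L * u" using uU eL by (simp add: pos_divide_le_eq mult.commute)
  then have "?K * u^3 \<le> (e * L * u) * u^3"
    by (rule mult_right_mono) (use u1 in auto)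
  also have "(e * L * u) * u^3 = e * L * u^4" by (simp add: eval_nat_numeral)
  finally have t3: "?K * u^3 \<le> e * L * u^4" .
  have "(1 + u^2 * real n) * (3 * u) + 3 * L * u^2 - e * L * u^4
      \<le> 3 * (real n + 1) * u^3 + 3 * L * u^3 - ?K * u^3"
    using t1 t1' t2 t3 by linarith
  also have "\<dots> = - (\<bar>ln \<epsilon>\<bar> + 1) * u^3" by (simp add: algebra_simps)
  also have "\<dots> \<le> - (\<bar>ln \<epsilon>\<bar> + 1)"
  proof -
    have "(\<bar>ln \<epsilon>\<bar> + 1) * 1 \<le> (\<bar>ln \<epsilon>\<bar> + 1) * u^3"
      by (rule mult_left_mono) (use u3 in auto)
    then show ?thesis by (simp add: algebra_simps)
  qed
  also have "\<dots> < ln \<epsilon>" by linarith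
  finally show ?thesis .
qed


lemma pow_plus1:
  fixes k :: nat assumes "n \<ge> 1"
  shows "k^n + 1 \<le> (k+1)^n"
  using assms
proof (induction n rule: dec_induct)
  case base
  then show ?case by simp
next
  case (step m)
  have "k^Suc m + 1 \<le> (k + 1) * (k^m + 1)" by (simp add: algebra_simps)
  also have "\<dots> \<le> (k + 1) * (k + 1)^m" using step.IH by (intro mult_left_mono) auto
  finally show ?case by simp
qed

lemma final_bound:
  fixes n q N k :: nat and e \<epsilon> :: real
  assumes n: "n \<ge> 1" and q: "q \<ge> 2" and e: "e > 0" and \<epsilon>: "\<epsilon> > 0"
    and u1: "sqrt (sqrt N) \<ge> 1"
    and uU: "sqrt (sqrt N) \<ge> (3 * (real n + 1) + 3 * ln q + \<bar>ln \<epsilon>\<bar> + 1) / (e * ln q)"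
    and ka: "real k \<le> sqrt N" and kN: "real ((n - 1) * k^2) \<le> (1 - e) * N"
  shows "real ((k + 1) * (k ^ n + 1) ^ k * q ^ (k * ((n - 1) * k + 1) + 2 * k)) < \<epsilon> * real q ^ N"
proof -
  define a where "a = sqrt N"
  define u where "u = sqrt a"
  define L where "L = ln (real q)"
  have L: "L > 0" unfolding L_def using q by simp
  have a0: "a \<ge> 0" unfolding a_def by simp
  have au: "a = u^2" unfolding u_def using a0 by simp
  have Na: "real N = a^2" unfolding a_def by simp
  have Nu: "real N = u^4" unfolding Na au by (simp add: power_mult[symmetric])
  have u1': "u \<ge> 1" using u1 unfolding u_def a_def .
  have a1: "a \<ge> 1" using u1' au by (simp add: one_le_power)
  define E where "E = (n - 1) * k^2 + 3 * k"
  have Eeq: "k * ((n - 1) * k + 1) + 2 * k = E" unfolding E_def by (simp add: algebra_simps power2_eq_square)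
  have kpos: "real k + 1 > 0" by simp
  have X: "real ((k + 1) * (k ^ n + 1) ^ k * q ^ (k * ((n - 1) * k + 1) + 2 * k))
      = (real k + 1) * (real k ^ n + 1) ^ k * real q ^ E"
    by (simp only: Eeq of_nat_mult of_nat_power of_nat_add of_nat_1)
  have lnX: "ln ((real k + 1) * (real k ^ n + 1) ^ k * real q ^ E)
      = ln (real k + 1) + real k * ln (real k ^ n + 1) + real E * L"
  proof -
    have p1: "real k ^ n + 1 > 0" by (rule add_nonneg_pos) auto
    have p2: "real q > 0" using q by simp
    have "ln ((real k + 1) * (real k ^ n + 1) ^ k * real q ^ E)
       = ln (real k + 1) + ln ((real k ^ n + 1) ^ k) + ln (real q ^ E)"
      using p1 p2 by (simp add: ln_mult)
    also have "\<dots> = ln (real k + 1) + real k * ln (real k ^ n + 1) + real E * L"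
      using p1 p2 unfolding L_def by (simp add: ln_realpow)
    finally show ?thesis .
  qed
  have t1: "ln (real k + 1) \<le> 3 * u"
  proof -
    have "ln (real k + 1) \<le> ln (a + 1)" using ka unfolding a_def by simp
    also have "\<dots> \<le> 3 * sqrt a" by (rule ln_le_3sqrt[OF a1])
    finally show ?thesis unfolding u_def .
  qed
  have t2: "real k * ln (real k ^ n + 1) \<le> u^2 * real n * (3 * u)"
  proof -
    have "real k ^ n + 1 \<le> (real k + 1) ^ n"
    proof -
      have "real (k^n + 1) \<le> real ((k+1)^n)" using pow_plus1[OF n, of k] by (simp only: of_nat_le_iff)
      then show ?thesis by (simp add: add.commute)
    qed
    moreover have "real k ^ n + 1 > 0" by (rule add_nonneg_pos) auto
    ultimately have "ln (real k ^ n + 1) \<le> ln ((real k + 1) ^ n)" by simp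
    also have "\<dots> = real n * ln (real k + 1)" by (simp add: ln_realpow)
    also have "\<dots> \<le> real n * (3 * u)" using t1 by (intro mult_left_mono) auto
    finally have l: "ln (real k ^ n + 1) \<le> real n * (3 * u)" .
    have l0: "0 \<le> ln (real k ^ n + 1)" by (rule ln_ge_zero) auto
    have "real k * ln (real k ^ n + 1) \<le> a * ln (real k ^ n + 1)"
      using ka l0 unfolding a_def by (intro mult_right_mono) auto
    also have "\<dots> \<le> a * (real n * (3 * u))" using l a0 by (intro mult_left_mono) auto
    finally show ?thesis unfolding au by (simp add: algebra_simps)
  qed
  have t3: "real E * L \<le> ((1 - e) * real N + 3 * u^2) * L"
  proof -
    have "real E = real ((n - 1) * k^2) + 3 * real k" unfolding E_def by simp
    also have "\<dots> \<le> (1 - e) * real N + 3 * u^2" using kN ka unfolding a_def[symmetric] au by simp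
    finally show ?thesis using L by (intro mult_right_mono) auto
  qed
  have core: "(1 + u^2 * real n) * (3 * u) + 3 * L * u^2 - e * L * u^4 < ln \<epsilon>"
    by (rule asym_core[OF L e u1']) (use uU in \<open>simp add: u_def a_def L_def\<close>)
  have "ln ((real k + 1) * (real k ^ n + 1) ^ k * real q ^ E)
      \<le> 3 * u + u^2 * real n * (3 * u) + ((1 - e) * real N + 3 * u^2) * L"
    using lnX t1 t2 t3 by linarith
  also have "\<dots> = (1 + u^2 * real n) * (3 * u) + 3 * L * u^2 - e * L * u^4 + real N * L"
    unfolding Nu by (simp add: algebra_simps)
  also have "\<dots> < ln \<epsilon> + real N * L" using core by simp
  also have "\<dots> = ln (\<epsilon> * real q ^ N)" unfolding L_def using \<epsilon> q by (simp add: ln_mult ln_realpow)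
  finally have "ln ((real k + 1) * (real k ^ n + 1) ^ k * real q ^ E) < ln (\<epsilon> * real q ^ N)" .
  then have "(real k + 1) * (real k ^ n + 1) ^ k * real q ^ E < \<epsilon> * real q ^ N"
  proof -
    have "real k ^ n + 1 > 0" by (rule add_nonneg_pos) auto
    then have "(real k + 1) * (real k ^ n + 1) ^ k * real q ^ E > 0" using q by simp
    moreover have "\<epsilon> * real q ^ N > 0" using \<epsilon> q by simp
    ultimately show ?thesis using \<open>ln _ < ln _\<close> by simp
  qed
  then show ?thesis unfolding X .
qed


theorem mainTheorem4:
  assumes "CARD('n::finite) \<ge> 2"
  shows "\<forall>\<epsilon>1 \<epsilon>2. \<epsilon>1 > 0 \<and> \<epsilon>2 > 0 \<longrightarrow>
    (\<exists>C::real. \<forall>T::'n \<Rightarrow> nat. (\<forall>i. T i > 0) \<and> real (\<Prod>i\<in>UNIV. T i) > C \<longrightarrow>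
       real (card {s \<in> periodic_seqs T.
                 real (lin_compl (s :: ('n \<Rightarrow> nat) \<Rightarrow> 'a::{finite,field})) >
                   sqrt ((1 - \<epsilon>1) * real (\<Prod>i\<in>UNIV. T i) / (real CARD('n) - 1))})
       / real (card (periodic_seqs T :: (('n \<Rightarrow> nat) \<Rightarrow> 'a) set))
       > 1 - \<epsilon>2)"
proof (intro allI impI)
  fix \<epsilon>1 \<epsilon>2 :: real
  assume "\<epsilon>1 > 0 \<and> \<epsilon>2 > 0"
  then have e1: "\<epsilon>1 > 0" and e2: "\<epsilon>2 > 0" by auto
  define n where "n = CARD('n)"
  define q where "q = CARD('a)"
  have n2: "n \<ge> 2" using assms unfolding n_def .
  have q2: "q \<ge> 2" unfolding q_def
    using card_mono[OF finite_class.finite_UNIV, of "{0::'a, 1}"] by simp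
  define e where "e = min \<epsilon>1 (1/2)"
  have e0: "e > 0" unfolding e_def using e1 by simp
  have ee: "e \<le> \<epsilon>1" "e \<le> 1/2" unfolding e_def by auto
  define U0 where "U0 = (3 * (real n + 1) + 3 * ln (real q) + \<bar>ln \<epsilon>2\<bar> + 1) / (e * ln (real q))"
  define C where "C = (max 1 U0)^4"
  show "\<exists>C::real. \<forall>T::'n \<Rightarrow> nat. (\<forall>i. T i > 0) \<and> real (\<Prod>i\<in>UNIV. T i) > C \<longrightarrow>
       real (card {s \<in> periodic_seqs T.
                 real (lin_compl (s :: ('n \<Rightarrow> nat) \<Rightarrow> 'a)) >
                   sqrt ((1 - \<epsilon>1) * real (\<Prod>i\<in>UNIV. T i) / (real CARD('n) - 1))})
       / real (card (periodic_seqs T :: (('n \<Rightarrow> nat) \<Rightarrow> 'a) set))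
       > 1 - \<epsilon>2"
  proof (intro exI[of _ C] allI impI)
    fix T :: "'n \<Rightarrow> nat"
    assume H: "(\<forall>i. T i > 0) \<and> real (\<Prod>i\<in>UNIV. T i) > C"
    then have T: "\<forall>i. T i > 0" and NC: "real (\<Prod>i\<in>UNIV. T i) > C" by auto
    define N where "N = (\<Prod>i\<in>UNIV. T i)"
    define R where "R = sqrt ((1 - \<epsilon>1) * real N / (real CARD('n) - 1))"
    define k where "k = nat \<lfloor>R\<rfloor>"
    let ?P = "periodic_seqs T :: (('n \<Rightarrow> nat) \<Rightarrow> 'a) set"
    let ?G = "{s \<in> ?P. real (lin_compl s) > R}"
    let ?Bd = "{s \<in> ?P. \<not> real (lin_compl s) > R}"
    have cP: "finite ?P" "card ?P = q ^ N"
      using card_periodic[OF T] unfolding q_def N_def by auto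
    have nm1: "real CARD('n) - 1 = real (n - 1)" using n2 unfolding n_def by simp
    have nm1p: "real (n - 1) \<ge> 1" using n2 by simp
    have M0: "max 1 U0 \<ge> 0" by simp
    have "real N > (max 1 U0)^4" using NC unfolding C_def N_def .
    then have "((max 1 U0)^2)^2 < real N" by (simp add: power_mult[symmetric])
    then have "(max 1 U0)^2 < sqrt (real N)" by (rule real_less_rsqrt)
    then have uM: "max 1 U0 < sqrt (sqrt (real N))" by (rule real_less_rsqrt)
    have u1: "sqrt (sqrt (real N)) \<ge> 1" and uU: "sqrt (sqrt (real N)) \<ge> U0" using uM by auto
    have N0: "real N \<ge> 0" by simp
    have ka: "real k \<le> sqrt (real N)"
    proof (cases "R \<ge> 0")
      case True
      have "real k \<le> R" unfolding k_def using True by (rule of_nat_floor)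
      also have "R \<le> sqrt (real N)" unfolding R_def
      proof (rule real_sqrt_le_mono)
        have "(1 - \<epsilon>1) * real N \<le> real N" using e1 N0 mult_right_mono[of "1 - \<epsilon>1" 1 "real N"] by simp
        also have "\<dots> \<le> real N * real (n - 1)" using nm1p N0 mult_left_mono[of 1 "real (n - 1)" "real N"] by simp
        finally have A: "(1 - \<epsilon>1) * real N \<le> real N * real (n - 1)" .
        have pos: "real (n - 1) > 0" using nm1p by simp
        show "(1 - \<epsilon>1) * real N / (real CARD('n) - 1) \<le> real N"
          unfolding nm1 by (subst pos_divide_le_eq[OF pos]) (rule A)
      qed
      finally show ?thesis .
    next
      case False
      then have "k = 0" unfolding k_def by simp
      then show ?thesis by simp
    qed
    have kN: "real ((n - 1) * k^2) \<le> (1 - e) * real N"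
    proof (cases "k = 0")
      case True
      then show ?thesis using ee N0 by simp
    next
      case False
      then have Rp: "R \<ge> 1" unfolding k_def by linarith
      have kR: "real k \<le> R" unfolding k_def using Rp by (intro of_nat_floor) simp
      have arg0: "(1 - \<epsilon>1) * real N / (real CARD('n) - 1) \<ge> 0"
      proof (rule ccontr)
        assume "\<not> ?thesis"
        then have "R < 0" unfolding R_def by simp
        then show False using Rp by simp
      qed
      have "real k ^ 2 \<le> R ^ 2" using kR by (intro power_mono) auto
      also have "R ^ 2 = (1 - \<epsilon>1) * real N / real (n - 1)" unfolding R_def using arg0 nm1 by simp
      finally have kk: "real k ^ 2 \<le> (1 - \<epsilon>1) * real N / real (n - 1)" .
      have pos: "real (n - 1) > 0" using nm1p by simp
      have "real k ^ 2 * real (n - 1) \<le> (1 - \<epsilon>1) * real N"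
        using kk by (subst (asm) pos_le_divide_eq[OF pos])
      then have "real (n - 1) * real k ^ 2 \<le> (1 - \<epsilon>1) * real N" by (simp only: mult.commute)
      also have "\<dots> \<le> (1 - e) * real N" using ee N0 by (intro mult_right_mono) auto
      finally show ?thesis by simp
    qed
    have sub: "?Bd \<subseteq> {s \<in> ?P. lin_compl s \<le> k}"
      unfolding k_def by (auto intro: le_nat_floor)
    have finK: "finite {s \<in> ?P. lin_compl s \<le> k}" using cP(1) by simp
    have "card ?Bd \<le> card {s \<in> ?P. lin_compl s \<le> k}" by (rule card_mono[OF finK sub])
    also have "\<dots> \<le> (k + 1) * (k ^ n + 1) ^ k * q ^ (k * ((n - 1) * k + 1) + 2 * k)"
      using bad_count[OF T, of k] unfolding n_def q_def .
    finally have cB: "real (card ?Bd) \<le> real ((k + 1) * (k ^ n + 1) ^ k * q ^ (k * ((n - 1) * k + 1) + 2 * k))"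
      by (simp only: of_nat_le_iff)
    have fb: "real ((k + 1) * (k ^ n + 1) ^ k * q ^ (k * ((n - 1) * k + 1) + 2 * k)) < \<epsilon>2 * real q ^ N"
      by (rule final_bound[OF _ q2 e0 e2 u1 _ ka kN]) (use n2 uU in \<open>auto simp: U0_def\<close>)
    have split: "card ?G + card ?Bd = card ?P"
    proof -
      have un: "?G \<union> ?Bd = ?P" by auto
      have dj: "?G \<inter> ?Bd = {}" by auto
      have fG: "finite ?G" using cP(1) by simp
      have fB: "finite ?Bd" using cP(1) by simp
      have "card (?G \<union> ?Bd) = card ?G + card ?Bd" by (rule card_Un_disjoint[OF fG fB dj])
      then show ?thesis by (simp only: un)
    qed
    have qN: "real q ^ N > 0" using q2 by simp
    have "real (card ?G) / real (card ?P) = (real q ^ N - real (card ?Bd)) / real q ^ N"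
    proof -
      have "real (card ?G) + real (card ?Bd) = real (card ?P)" unfolding split[symmetric] by (simp only: of_nat_add)
      then have "real (card ?G) = real q ^ N - real (card ?Bd)" using cP(2) by simp
      then show ?thesis using cP(2) by simp
    qed
    also have "\<dots> = 1 - real (card ?Bd) / real q ^ N" using qN by (simp add: diff_divide_distrib)
    also have "\<dots> > 1 - \<epsilon>2" using cB fb qN by (simp add: divide_less_eq)
    finally show "real (card ?G) / real (card ?P) > 1 - \<epsilon>2" .
  qed
qed

end
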